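(* Let $\alpha$ be a quasiorder on a set $A$. The following are equivalent: (1) $\alpha$ is a half-space on $A$; (2) for every three-element subset $B\subseteq A$, the restriction $\alpha\cap(B\times B)$ is a half-space on $B$; (3) for all $x,y,z\in A$: if $(x,y)\notin\alpha$, $(y,x)\notin\alpha$, $(x,z)\in\alpha$ and $z\neq x$, then $(y,z)\in\alpha$; (4) for all $x,y,z\in A$: if $(z,y)\notin\alpha$, $(y,z)\notin\alpha$, $(x,z)\in\alpha$ and $x\neq z$, then $(x,y)\in\alpha$.
   Context: A quasiorder on a set $A$ is a reflexive and transitive relation on $A$; $\Delta_A=\{(a,a)\mid a\in A\}$. A quasiorder $\alpha$ on $A$ is a half-space on $A$ if there exists a quasiorder $\beta$ on $A$ with $\alpha\cup\beta=A\times A$ and $\alpha\cap\beta=\Delta_A$ (equivalently, $\Delta_A\cup((A\times A)\setminus\alpha)$ is transitive). *)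

theory Defs
  imports Main
begin

definition quasiorder_on :: "'a set \<Rightarrow> ('a \<times> 'a) set \<Rightarrow> bool" where
  "quasiorder_on A r \<longleftrightarrow> r \<subseteq> A \<times> A \<and> refl_on A r \<and> trans r"

definition half_space_on :: "'a set \<Rightarrow> ('a \<times> 'a) set \<Rightarrow> bool" where
  "half_space_on A \<alpha> \<longleftrightarrow> quasiorder_on A \<alpha> \<and>
     (\<exists>\<beta>. quasiorder_on A \<beta> \<and> \<alpha> \<union> \<beta> = A \<times> A \<and> \<alpha> \<inter> \<beta> = Id_on A)"

end

theory Submission
  imports Defs
begin

definition TT :: "'a set \<Rightarrow> ('a \<times> 'a) set \<Rightarrow> bool" where
  "TT A r \<longleftrightarrow> (\<forall>a\<in>A. \<forall>b\<in>A. \<forall>c\<in>A. (a,c) \<in> r \<and> a \<noteq> c \<longrightarrow> (a,b) \<in> r \<or> (b,c) \<in> r)"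

lemma hs_TT:
  assumes q: "quasiorder_on A r"
  shows "half_space_on A r \<longleftrightarrow> TT A r"
proof
  assume "half_space_on A r"
  then obtain \<beta> where b: "quasiorder_on A \<beta>" "r \<union> \<beta> = A \<times> A" "r \<inter> \<beta> = Id_on A"
    unfolding half_space_on_def by blast
  show "TT A r" unfolding TT_def
  proof (intro ballI impI)
    fix a b c assume abc: "a \<in> A" "b \<in> A" "c \<in> A" and h: "(a,c) \<in> r \<and> a \<noteq> c"
    show "(a,b) \<in> r \<or> (b,c) \<in> r"
    proof (rule ccontr)
      assume "\<not> ?thesis"
      then have "(a,b) \<in> \<beta>" "(b,c) \<in> \<beta>" using b(2) abc by blast+
      then have "(a,c) \<in> \<beta>" using b(1) unfolding quasiorder_on_def trans_def by blast
      then have "(a,c) \<in> Id_on A" using h b(3) by blast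
      then show False using h by auto
    qed
  qed
next
  assume t: "TT A r"
  define \<beta> where "\<beta> = Id_on A \<union> (A \<times> A - r)"
  have rs: "r \<subseteq> A \<times> A" and rr: "refl_on A r" and rt: "trans r" using q unfolding quasiorder_on_def by auto
  have "trans \<beta>"
  proof (rule transI)
    fix x y z assume xy: "(x,y) \<in> \<beta>" and yz: "(y,z) \<in> \<beta>"
    show "(x,z) \<in> \<beta>"
    proof (cases "x = y \<or> y = z")
      case True then show ?thesis using xy yz by auto
    next
      case False
      then have "x \<in> A" "y \<in> A" "z \<in> A" "(x,y) \<notin> r" "(y,z) \<notin> r" using xy yz unfolding \<beta>_def by auto
      then show ?thesis using t unfolding TT_def \<beta>_def by auto
    qed
  qed
  moreover have "quasiorder_on A \<beta>" using calculation unfolding quasiorder_on_def \<beta>_def refl_on_def by auto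
  moreover have "r \<union> \<beta> = A \<times> A" using rs unfolding \<beta>_def by auto
  moreover have "r \<inter> \<beta> = Id_on A" using rr unfolding \<beta>_def refl_on_def by auto
  ultimately show "half_space_on A r" using q unfolding half_space_on_def by blast
qed

lemma qo_restr:
  assumes "quasiorder_on A r" "B \<subseteq> A"
  shows "quasiorder_on B (r \<inter> (B \<times> B))"
  using assms unfolding quasiorder_on_def refl_on_def trans_def by blast

theorem proposition2p2:
  fixes A :: "'a set" and \<alpha> :: "('a \<times> 'a) set"
  assumes "quasiorder_on A \<alpha>"
  shows "(half_space_on A \<alpha> \<longleftrightarrow>
           (\<forall>B. B \<subseteq> A \<and> card B = 3 \<longrightarrow> half_space_on B (\<alpha> \<inter> (B \<times> B))))
       \<and> (half_space_on A \<alpha> \<longleftrightarrow>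
           (\<forall>x\<in>A. \<forall>y\<in>A. \<forall>z\<in>A. (x, y) \<notin> \<alpha> \<and> (y, x) \<notin> \<alpha> \<and> (x, z) \<in> \<alpha> \<and> z \<noteq> x
              \<longrightarrow> (y, z) \<in> \<alpha>))
       \<and> (half_space_on A \<alpha> \<longleftrightarrow>
           (\<forall>x\<in>A. \<forall>y\<in>A. \<forall>z\<in>A. (z, y) \<notin> \<alpha> \<and> (y, z) \<notin> \<alpha> \<and> (x, z) \<in> \<alpha> \<and> x \<noteq> z
              \<longrightarrow> (x, y) \<in> \<alpha>))"
proof -
  have H: "half_space_on A \<alpha> \<longleftrightarrow> TT A \<alpha>" using hs_TT assms by blast
  have rr: "refl_on A \<alpha>" and rt: "trans \<alpha>" using assms unfolding quasiorder_on_def by auto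
  have r: "\<And>a. a \<in> A \<Longrightarrow> (a,a) \<in> \<alpha>" using rr unfolding refl_on_def by auto
  have t: "\<And>a b c. (a,b) \<in> \<alpha> \<Longrightarrow> (b,c) \<in> \<alpha> \<Longrightarrow> (a,c) \<in> \<alpha>" using rt unfolding trans_def by blast
  have 1: "TT A \<alpha> \<longleftrightarrow> (\<forall>B. B \<subseteq> A \<and> card B = 3 \<longrightarrow> half_space_on B (\<alpha> \<inter> (B \<times> B)))"
  proof
    assume T: "TT A \<alpha>"
    show "\<forall>B. B \<subseteq> A \<and> card B = 3 \<longrightarrow> half_space_on B (\<alpha> \<inter> (B \<times> B))"
    proof (intro allI impI)
      fix B assume B: "B \<subseteq> A \<and> card B = 3"
      have "TT B (\<alpha> \<inter> (B \<times> B))" using T B unfolding TT_def by blast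
      then show "half_space_on B (\<alpha> \<inter> (B \<times> B))" using hs_TT qo_restr assms B by blast
    qed
  next
    assume R: "\<forall>B. B \<subseteq> A \<and> card B = 3 \<longrightarrow> half_space_on B (\<alpha> \<inter> (B \<times> B))"
    show "TT A \<alpha>" unfolding TT_def
    proof (intro ballI impI)
      fix a b c assume abc: "a \<in> A" "b \<in> A" "c \<in> A" and h: "(a,c) \<in> \<alpha> \<and> a \<noteq> c"
      show "(a,b) \<in> \<alpha> \<or> (b,c) \<in> \<alpha>"
      proof (cases "b = a \<or> b = c")
        case True then show ?thesis using r abc by auto
      next
        case False
        let ?B = "{a,b,c}"
        have "card ?B = 3" using False h by auto
        moreover have "?B \<subseteq> A" using abc by blast
        ultimately have "half_space_on ?B (\<alpha> \<inter> (?B \<times> ?B))" using R by blast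
        then have "TT ?B (\<alpha> \<inter> (?B \<times> ?B))" using hs_TT qo_restr[OF assms, of ?B] abc by blast
        then show ?thesis using h unfolding TT_def by blast
      qed
    qed
  qed
  have 2: "TT A \<alpha> \<longleftrightarrow> (\<forall>x\<in>A. \<forall>y\<in>A. \<forall>z\<in>A. (x, y) \<notin> \<alpha> \<and> (y, x) \<notin> \<alpha> \<and> (x, z) \<in> \<alpha> \<and> z \<noteq> x
              \<longrightarrow> (y, z) \<in> \<alpha>)"
    unfolding TT_def using t by metis
  have 3: "TT A \<alpha> \<longleftrightarrow> (\<forall>x\<in>A. \<forall>y\<in>A. \<forall>z\<in>A. (z, y) \<notin> \<alpha> \<and> (y, z) \<notin> \<alpha> \<and> (x, z) \<in> \<alpha> \<and> x \<noteq> z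
              \<longrightarrow> (x, y) \<in> \<alpha>)"
    unfolding TT_def using t by metis
  show ?thesis using H 1 2 3 by blast
qed

end
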